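(* Let $\mathcal{A}$ be Suslin, $\Phi\colon\mathcal{A}\to\mathbb{R}$ measurable and semibounded, $\mathcal{Q}$ separable and metrizable, and $\Psi\colon\mathcal{A}\to\mathcal{Q}$ measurable. For measurable $g_1,\dots,g_n\colon\mathcal{Q}\to\mathbb{R}$ and closed (possibly semi-infinite or degenerate) intervals $I_1,\dots,I_n$, let $\mathfrak{Q}:=\{\mathbb{Q}\in\mathcal{M}(\mathcal{Q}):\mathbb{E}_{\mathbb{Q}}[g_i]\in I_i,\ i=1,\dots,n\}$, $\Pi(I):=\{\pi\in\mathcal{M}(\mathcal{A}):\Psi\pi\in\mathfrak{Q}\}$, and $\Pi(I,n):=\Pi(I)\cap\Delta(n)$. Then $\mathcal{U}(\Pi(I))=\mathcal{U}(\Pi(I,n))$, where \[\mathcal{U}(\Pi(I,n))=\sup\Big\{\sum_{i=0}^n\alpha_i\Phi(\mu_i)\ :\ \mu_i\in\mathcal{A},\ \alpha_i\ge0,\ \sum_{i=0}^n\alpha_i=1,\ \sum_{i=0}^n\alpha_ig_j(\Psi(\mu_i))\in I_j\text{ for }j=1,\dots,n\Big\}.\]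
   Context: $\mathcal{M}(\mathcal{Y})$: Borel probability measures; $\Psi\pi$ is the pushforward of $\pi$. Implicit in the definition of $\mathfrak{Q}$ is that all $n$ integrals exist. $\Delta(n):=\{\sum_{i=0}^n\alpha_i\delta_{\mu_i}:\mu_i\in\mathcal{A},\alpha_i\ge0\}$. For $\Pi\subseteq\mathcal{M}(\mathcal{A})$, $\mathcal{U}(\Pi):=\sup_{\pi\in\Pi}\mathbb{E}_\pi[\Phi]$, with $\sup\varnothing=-\infty$. *)

theory Defs
  imports "HOL-Probability.Probability"
begin

definition borel_probs :: "'y::topological_space measure set" where
  "borel_probs = {M. sets M = sets borel \<and> prob_space M}"

(* Expectation in the extended reals (exists for semibounded f) *)
definition ereal_expect :: "'y measure \<Rightarrow> ('y \<Rightarrow> real) \<Rightarrow> ereal" where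
  "ereal_expect M f =
     enn2ereal (\<integral>\<^sup>+ x. ennreal (f x) \<partial>M) - enn2ereal (\<integral>\<^sup>+ x. ennreal (- f x) \<partial>M)"

(* U(Pi) = sup of E_pi[Phi] over Pi, with sup {} = -infinity *)
definition U_val :: "('y \<Rightarrow> real) \<Rightarrow> 'y measure set \<Rightarrow> ereal" where
  "U_val Phi PP = (SUP pi\<in>PP. ereal_expect pi Phi)"

definition closed_interval :: "real set \<Rightarrow> bool" where
  "closed_interval S \<longleftrightarrow> (\<exists>a b. a \<le> b \<and> S = {a..b}) \<or> (\<exists>a. S = {a..}) \<or> (\<exists>b. S = {..b})"

definition Qfrak :: "nat \<Rightarrow> (nat \<Rightarrow> 'q::topological_space \<Rightarrow> real) \<Rightarrow> (nat \<Rightarrow> real set) \<Rightarrow> 'q measure set" where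
  "Qfrak n g I = {Q \<in> borel_probs. \<forall>j\<in>{1..n}. integrable Q (g j) \<and> (\<integral>x. g j x \<partial>Q) \<in> I j}"

definition PiI :: "nat \<Rightarrow> ('a::topological_space \<Rightarrow> 'q::topological_space) \<Rightarrow> (nat \<Rightarrow> 'q \<Rightarrow> real) \<Rightarrow> (nat \<Rightarrow> real set) \<Rightarrow> 'a measure set" where
  "PiI n Psi g I = {pi \<in> borel_probs. distr pi borel Psi \<in> Qfrak n g I}"

definition Delta :: "nat \<Rightarrow> 'a::topological_space measure set" where
  "Delta n = {pi. sets pi = sets borel \<and> (\<exists>mu alpha. (\<forall>i\<le>n. alpha i \<ge> (0::real)) \<and>
      (\<forall>S\<in>sets borel. emeasure pi S = ennreal (\<Sum>i\<le>n. alpha i * indicator S (mu i))))}"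

end

theory Submission
  imports Defs
begin


lemma sep_lemma:
  fixes K :: "(nat \<Rightarrow> real) set"
  assumes "finite J"
    and "\<And>u v. u \<in> K \<Longrightarrow> v \<in> K \<Longrightarrow> (\<lambda>j. u j + v j) \<in> K"
    and "\<And>u a. u \<in> K \<Longrightarrow> a > 0 \<Longrightarrow> (\<lambda>j. a * u j) \<in> K"
    and "\<And>v. v \<in> K \<Longrightarrow> \<exists>j\<in>J. v j \<noteq> 0"
  shows "\<exists>l. (J \<noteq> {} \<longrightarrow> (\<exists>j\<in>J. l j \<noteq> 0)) \<and> (\<forall>v\<in>K. 0 \<le> (\<Sum>j\<in>J. l j * v j))"
  using assms
proof (induction J arbitrary: K rule: finite_induct)
  case empty
  then show ?case by (intro exI[of _ "\<lambda>_. 0"]) auto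
next
  case (insert k J)
  note add = insert.prems(1) and scl = insert.prems(2) and nz = insert.prems(3)
  have sumk: "(\<Sum>j\<in>insert k J. l j * v j) = l k * v k + (\<Sum>j\<in>J. l j * v j)" for l v
    using insert.hyps by (simp add: sum.insert)
  have z: "(\<Sum>j\<in>J. (if j = k then a else 0) * v j) = 0" for a :: real and v :: "nat \<Rightarrow> real"
    using insert.hyps by (intro sum.neutral) auto
  show ?case
  proof (cases "\<forall>v\<in>K. v k \<ge> 0")
    case True
    show ?thesis
      by (intro exI[of _ "\<lambda>j. if j = k then 1 else 0"]) (use True insert.hyps in \<open>auto simp: sumk z\<close>)
  next
    case F1: False
    then obtain yn where yn: "yn \<in> K" "yn k < 0" by force
    show ?thesis
    proof (cases "\<forall>v\<in>K. v k \<le> 0")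
      case True
      show ?thesis
        by (intro exI[of _ "\<lambda>j. if j = k then -1 else 0"]) (use True insert.hyps in \<open>auto simp: sumk z\<close>)
    next
      case False
      then obtain xp where xp: "xp \<in> K" "xp k > 0" by force
      define L where "L = {v\<in>K. v k = 0}"
      have comb: "(\<lambda>j. (- y k) * v j + v k * y j) \<in> L" if "v \<in> K" "y \<in> K" "v k > 0" "y k < 0" for v y
      proof -
        have "(\<lambda>j. (- y k) * v j) \<in> K" using scl[of v "- y k"] that by auto
        moreover have "(\<lambda>j. v k * y j) \<in> K" using scl[of y "v k"] that by auto
        ultimately have "(\<lambda>j. (- y k) * v j + v k * y j) \<in> K" using add by blast
        then show ?thesis unfolding L_def by (auto simp: algebra_simps)
      qed
      obtain l' where l': "J \<noteq> {} \<longrightarrow> (\<exists>j\<in>J. l' j \<noteq> 0)" "\<forall>v\<in>L. 0 \<le> (\<Sum>j\<in>J. l' j * v j)"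
      proof -
        have "\<exists>l. (J \<noteq> {} \<longrightarrow> (\<exists>j\<in>J. l j \<noteq> 0)) \<and> (\<forall>v\<in>L. 0 \<le> (\<Sum>j\<in>J. l j * v j))"
        proof (rule insert.IH)
          show "(\<lambda>j. u j + v j) \<in> L" if "u \<in> L" "v \<in> L" for u v
            using that add unfolding L_def by auto
          show "(\<lambda>j. a * u j) \<in> L" if "u \<in> L" "a > 0" for u a
            using that scl unfolding L_def by auto
          show "\<exists>j\<in>J. v j \<noteq> 0" if "v \<in> L" for v
            using that nz[of v] unfolding L_def by auto
        qed
        then show ?thesis using that by blast
      qed
      have key: "- (\<Sum>j\<in>J. l' j * v j) / v k \<le> (\<Sum>j\<in>J. l' j * y j) / (- y k)"
        if "v \<in> K" "y \<in> K" "v k > 0" "y k < 0" for v y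
      proof -
        have "0 \<le> (\<Sum>j\<in>J. l' j * ((- y k) * v j + v k * y j))"
          using bspec[OF l'(2) comb[OF that]] by simp
        also have "\<dots> = (- y k) * (\<Sum>j\<in>J. l' j * v j) + v k * (\<Sum>j\<in>J. l' j * y j)"
          by (simp only: sum_distrib_left sum.distrib[symmetric]) (rule sum.cong, auto simp: algebra_simps)
        finally have h: "0 \<le> (- y k) * (\<Sum>j\<in>J. l' j * v j) + v k * (\<Sum>j\<in>J. l' j * y j)" .
        show ?thesis using that h by (simp add: field_simps)
      qed
      have Jne: "J \<noteq> {}"
      proof
        assume "J = {}"
        have "(\<lambda>j. (- yn k) * xp j + xp k * yn j) \<in> L" using comb xp yn by blast
        then show False using nz \<open>J = {}\<close> unfolding L_def by force
      qed
      define B where "B = {- (\<Sum>j\<in>J. l' j * v j) / v k | v. v \<in> K \<and> v k > 0}"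
      define c where "c = Sup B"
      have Bne: "B \<noteq> {}" using xp unfolding B_def by blast
      have Bbdd: "bdd_above B" unfolding B_def bdd_above_def using key yn by blast
      have c_ge: "- (\<Sum>j\<in>J. l' j * v j) / v k \<le> c" if "v \<in> K" "v k > 0" for v
        unfolding c_def by (rule cSup_upper) (use that Bbdd in \<open>auto simp: B_def\<close>)
      have c_le: "c \<le> (\<Sum>j\<in>J. l' j * y j) / (- y k)" if "y \<in> K" "y k < 0" for y
        unfolding c_def by (rule cSup_least[OF Bne]) (use that key in \<open>auto simp: B_def\<close>)
      define l where "l = l'(k := c)"
      have sJ: "(\<Sum>j\<in>J. l j * v j) = (\<Sum>j\<in>J. l' j * v j)" for v
        using insert.hyps unfolding l_def by (intro sum.cong) auto
      show ?thesis
      proof (intro exI[of _ l] conjI ballI impI)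
        show "\<exists>j\<in>insert k J. l j \<noteq> 0"
          using l'(1) Jne insert.hyps unfolding l_def by force
        fix v assume v: "v \<in> K"
        have "0 \<le> c * v k + (\<Sum>j\<in>J. l' j * v j)"
        proof (cases "v k > 0")
          case True
          then show ?thesis using c_ge[OF v True] by (simp add: field_simps)
        next
          case f: False
          show ?thesis
          proof (cases "v k < 0")
            case True
            then show ?thesis using c_le[OF v True] by (simp add: field_simps)
          next
            case False
            then have "v \<in> L" using f v unfolding L_def by auto
            then show ?thesis using l'(2) False f by auto
          qed
        qed
        then show "0 \<le> (\<Sum>j\<in>insert k J. l j * v j)"
          using sumk[of l v] sJ[of v] by (simp add: l_def)
      qed
    qed
  qed
qed



lemma hom_sol:
  fixes R :: "('x \<Rightarrow> real) set" and S :: "'x set"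
  assumes "finite S" "finite R" "card R < card S"
  shows "\<exists>w. (\<exists>x\<in>S. w x \<noteq> 0) \<and> (\<forall>r\<in>R. (\<Sum>x\<in>S. w x * r x) = 0)"
  using assms
proof (induction "card R" arbitrary: R S rule: less_induct)
  case less
  show ?case
  proof (cases "R = {}")
    case True
    from less.prems have "S \<noteq> {}" by auto
    then obtain x0 where "x0 \<in> S" by auto
    then show ?thesis using True by (intro exI[of _ "\<lambda>x. if x = x0 then 1 else 0"]) auto
  next
    case False
    then obtain r where r: "r \<in> R" by auto
    define R0 where "R0 = R - {r}"
    have "card R > 0" using r less.prems card_gt_0_iff by blast
    then have cR0: "card R0 < card R" "card R0 = card R - 1" using r less.prems unfolding R0_def
      by (auto simp: card_Diff_singleton)
    show ?thesis
    proof (cases "\<forall>x\<in>S. r x = 0")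
      case True
      obtain w where w: "\<exists>x\<in>S. w x \<noteq> 0" "\<forall>q\<in>R0. (\<Sum>x\<in>S. w x * q x) = 0"
        using less.hyps[OF cR0(1), of S] less.prems cR0 unfolding R0_def by auto
      have "(\<Sum>x\<in>S. w x * r x) = 0" using True by simp
      then show ?thesis using w unfolding R0_def by (intro exI[of _ w]) auto
    next
      case False
      then obtain x0 where x0: "x0 \<in> S" "r x0 \<noteq> 0" by auto
      define S0 where "S0 = S - {x0}"
      define F where "F = (\<lambda>q x. q x - q x0 * r x / r x0)"
      define R' where "R' = F ` R0"
      have fin: "finite S0" "finite R'" using less.prems unfolding S0_def R'_def R0_def by auto
      have "card R' \<le> card R0" unfolding R'_def using less.prems R0_def by (intro card_image_le) auto
      moreover have "card S0 = card S - 1" unfolding S0_def using x0 less.prems by auto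
      ultimately have c1: "card R' < card R" "card R' < card S0" using cR0 less.prems by linarith+
      obtain w0 where w0: "\<exists>x\<in>S0. w0 x \<noteq> 0" "\<forall>q\<in>R'. (\<Sum>x\<in>S0. w0 x * q x) = 0"
        using less.hyps[OF c1(1) fin(1) fin(2) c1(2)] by auto
      define w where "w = w0(x0 := - (\<Sum>x\<in>S0. w0 x * r x) / r x0)"
      have sumS: "(\<Sum>x\<in>S. w x * q x) = w x0 * q x0 + (\<Sum>x\<in>S0. w0 x * q x)" for q
      proof -
        have "(\<Sum>x\<in>S. w x * q x) = w x0 * q x0 + (\<Sum>x\<in>S0. w x * q x)"
          unfolding S0_def using x0 less.prems by (simp add: sum.remove)
        also have "(\<Sum>x\<in>S0. w x * q x) = (\<Sum>x\<in>S0. w0 x * q x)"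
          unfolding w_def S0_def by (intro sum.cong) auto
        finally show ?thesis .
      qed
      show ?thesis
      proof (intro exI[of _ w] conjI ballI)
        show "\<exists>x\<in>S. w x \<noteq> 0" using w0(1) unfolding w_def S0_def by auto
        fix q assume q: "q \<in> R"
        show "(\<Sum>x\<in>S. w x * q x) = 0"
        proof (cases "q = r")
          case True
          then show ?thesis unfolding True sumS using x0 by (simp add: w_def)
        next
          case False
          then have "F q \<in> R'" using q unfolding R'_def R0_def by auto
          then have "(\<Sum>x\<in>S0. w0 x * F q x) = 0" using w0(2) by auto
          moreover have "(\<Sum>x\<in>S0. w0 x * F q x) = (\<Sum>x\<in>S0. w0 x * q x) - q x0 / r x0 * (\<Sum>x\<in>S0. w0 x * r x)"
            unfolding F_def by (simp add: sum_subtractf sum_distrib_left algebra_simps)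
          ultimately show ?thesis unfolding sumS using x0 by (simp add: w_def field_simps)
        qed
      qed
    qed
  qed
qed

lemma reduce:
  fixes R :: "('x \<Rightarrow> real) set" and S :: "'x set"
  assumes "finite S" "finite R" "(\<lambda>_. 1) \<in> R" "\<forall>x\<in>S. \<alpha> x \<ge> 0"
  shows "\<exists>S' \<beta>. S' \<subseteq> S \<and> card S' \<le> card R \<and> (\<forall>x\<in>S'. \<beta> x \<ge> 0) \<and>
           (\<forall>r\<in>R. (\<Sum>x\<in>S'. \<beta> x * r x) = (\<Sum>x\<in>S. \<alpha> x * r x)) \<and>
           (\<Sum>x\<in>S. \<alpha> x * \<psi> x) \<le> (\<Sum>x\<in>S'. \<beta> x * \<psi> x)"
  using assms
proof (induction "card S" arbitrary: S \<alpha> rule: less_induct)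
  case less
  show ?case
  proof (cases "card S \<le> card R")
    case True
    then show ?thesis using less.prems by (intro exI[of _ S] exI[of _ \<alpha>]) auto
  next
    case False
    then obtain w where w: "\<exists>x\<in>S. w x \<noteq> 0" "\<forall>r\<in>R. (\<Sum>x\<in>S. w x * r x) = 0"
      using hom_sol[of S R] less.prems by auto
    define sg :: real where "sg = (if (\<Sum>x\<in>S. w x * \<psi> x) \<ge> 0 then 1 else -1)"
    define w' where "w' = (\<lambda>x. sg * w x)"
    have w'1: "\<exists>x\<in>S. w' x \<noteq> 0" using w(1) unfolding w'_def sg_def by auto
    have w'2: "\<forall>r\<in>R. (\<Sum>x\<in>S. w' x * r x) = 0" using w(2) unfolding w'_def
      by (auto simp: sum_distrib_left[symmetric] mult.assoc)
    have w'3: "(\<Sum>x\<in>S. w' x * \<psi> x) \<ge> 0" unfolding w'_def sg_def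
      by (auto simp: sum_distrib_left[symmetric] mult.assoc sum_negf)
    have sw: "(\<Sum>x\<in>S. w' x) = 0" using w'2 less.prems(3) by auto
    have "\<exists>x\<in>S. w' x < 0"
    proof (rule ccontr)
      assume "\<not> ?thesis"
      then have "\<forall>x\<in>S. 0 \<le> w' x" by auto
      then have "\<forall>x\<in>S. w' x = 0" using sum_nonneg_eq_0_iff[OF less.prems(1)] sw by blast
      then show False using w'1 by auto
    qed
    define i where "i = (\<lambda>x. \<alpha> x / (- w' x)) ` {x\<in>S. w' x < 0}"
    define t where "t = Min i"
    have ine: "i \<noteq> {}" "finite i" unfolding i_def using \<open>\<exists>x\<in>S. w' x < 0\<close> less.prems by auto
    obtain a where a: "a \<in> S" "w' a < 0" "t = \<alpha> a / (- w' a)"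
      using Min_in[OF ine(2) ine(1)] unfolding t_def i_def by auto
    have t0: "t \<ge> 0" using a less.prems(4) by (auto intro!: divide_nonneg_neg)
    define \<beta> where "\<beta> = (\<lambda>x. \<alpha> x + t * w' x)"
    have bnn: "\<forall>x\<in>S. \<beta> x \<ge> 0"
    proof
      fix x assume x: "x \<in> S"
      show "\<beta> x \<ge> 0"
      proof (cases "w' x < 0")
        case True
        then have "t \<le> \<alpha> x / (- w' x)" unfolding t_def using ine x by (intro Min_le) (auto simp: i_def)
        then show ?thesis using True unfolding \<beta>_def by (simp add: field_simps)
      next
        case False
        then show ?thesis using x less.prems(4) t0 unfolding \<beta>_def by auto
      qed
    qed
    have ba: "\<beta> a = 0" using a unfolding \<beta>_def by (simp add: field_simps)
    have bsum: "(\<Sum>x\<in>S. \<beta> x * f x) = (\<Sum>x\<in>S. \<alpha> x * f x) + t * (\<Sum>x\<in>S. w' x * f x)" for f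
      unfolding \<beta>_def by (simp add: algebra_simps sum.distrib sum_distrib_left)
    define S1 where "S1 = S - {a}"
    have S1sum: "(\<Sum>x\<in>S1. \<beta> x * f x) = (\<Sum>x\<in>S. \<beta> x * f x)" for f
      unfolding S1_def using a less.prems ba by (simp add: sum.remove)
    have "card S > 0" using a less.prems card_gt_0_iff by blast
    then have cS1: "card S1 < card S" unfolding S1_def using a less.prems by (auto simp: card_Diff_singleton)
    obtain S' \<beta>' where S': "S' \<subseteq> S1" "card S' \<le> card R" "\<forall>x\<in>S'. \<beta>' x \<ge> 0"
      "\<forall>r\<in>R. (\<Sum>x\<in>S'. \<beta>' x * r x) = (\<Sum>x\<in>S1. \<beta> x * r x)"
      "(\<Sum>x\<in>S1. \<beta> x * \<psi> x) \<le> (\<Sum>x\<in>S'. \<beta>' x * \<psi> x)"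
      using less.hyps[OF cS1, of \<beta>] less.prems bnn unfolding S1_def by auto
    show ?thesis
    proof (intro exI[of _ S'] exI[of _ \<beta>'] conjI ballI)
      show "S' \<subseteq> S" using S'(1) unfolding S1_def by auto
      show "card S' \<le> card R" by fact
      show "\<And>x. x \<in> S' \<Longrightarrow> 0 \<le> \<beta>' x" using S'(3) by auto
      show "(\<Sum>x\<in>S'. \<beta>' x * r x) = (\<Sum>x\<in>S. \<alpha> x * r x)" if "r \<in> R" for r
        using S'(4) that S1sum bsum w'2 by auto
      show "(\<Sum>x\<in>S. \<alpha> x * \<psi> x) \<le> (\<Sum>x\<in>S'. \<beta>' x * \<psi> x)"
        using S'(5) S1sum[of \<psi>] bsum[of \<psi>] w'3 t0 by (smt (verit) mult_nonneg_nonneg)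
    qed
  qed
qed



lemma sum_if_ext:
  assumes "finite T" "S \<subseteq> T"
  shows "(\<Sum>x\<in>T. (if x \<in> S then a x else 0) * f x) = (\<Sum>x\<in>S. a x * (f x :: real))"
proof -
  have "(\<Sum>x\<in>T. (if x \<in> S then a x else 0) * f x) = (\<Sum>x\<in>T. if x \<in> S then a x * f x else 0)"
    by (intro sum.cong) auto
  also have "\<dots> = sum (\<lambda>x. a x * f x) {x\<in>T. x \<in> S}" using assms by (simp add: sum.inter_filter)
  also have "{x\<in>T. x \<in> S} = S" using assms by auto
  finally show ?thesis .
qed

lemma mean_hull:
  fixes h :: "nat \<Rightarrow> 'x \<Rightarrow> real"
  assumes "finite J" "prob_space M" "\<And>j. j \<in> J \<Longrightarrow> integrable M (h j)"
  shows "\<exists>S \<alpha>. finite S \<and> S \<subseteq> space M \<and> (\<forall>x\<in>S. \<alpha> x \<ge> 0) \<and> sum \<alpha> S = 1 \<and>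
            (\<forall>j\<in>J. (\<Sum>x\<in>S. \<alpha> x * h j x) = (\<integral>x. h j x \<partial>M))"
  using assms
proof (induction "card J" arbitrary: J M rule: less_induct)
  case less
  interpret P: prob_space M by fact
  show ?case
  proof (cases "J = {}")
    case True
    obtain x0 where "x0 \<in> space M" using P.not_empty by auto
    then show ?thesis using True by (intro exI[of _ "{x0}"] exI[of _ "\<lambda>_. 1"]) auto
  next
    case Jne: False
    define m where "m = (\<lambda>j. \<integral>x. h j x \<partial>M)"
    define K where "K = {v. \<exists>S \<alpha>. finite S \<and> S \<subseteq> space M \<and> (\<forall>x\<in>S. \<alpha> x \<ge> 0) \<and> sum \<alpha> S > 0 \<and>
       v = (\<lambda>j. \<Sum>x\<in>S. \<alpha> x * (h j x - m j))}"
    show ?thesis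
    proof (cases "\<exists>v\<in>K. \<forall>j\<in>J. v j = 0")
      case True
      then obtain S \<alpha> where S: "finite S" "S \<subseteq> space M" "\<forall>x\<in>S. \<alpha> x \<ge> 0" "sum \<alpha> S > 0"
        and z: "\<forall>j\<in>J. (\<Sum>x\<in>S. \<alpha> x * (h j x - m j)) = 0"
        unfolding K_def by auto
      define \<beta> where "\<beta> = (\<lambda>x. \<alpha> x / sum \<alpha> S)"
      show ?thesis
      proof (intro exI[of _ S] exI[of _ \<beta>] conjI ballI)
        show "sum \<beta> S = 1" using S(4) unfolding \<beta>_def by (simp add: sum_divide_distrib[symmetric])
        show "0 \<le> \<beta> x" if "x \<in> S" for x using S that unfolding \<beta>_def by auto
        fix j assume j: "j \<in> J"
        have "(\<Sum>x\<in>S. \<alpha> x * (h j x - m j)) = (\<Sum>x\<in>S. \<alpha> x * h j x) - m j * sum \<alpha> S"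
          by (simp add: algebra_simps sum_subtractf sum_distrib_left)
        then have "(\<Sum>x\<in>S. \<alpha> x * h j x) = m j * sum \<alpha> S" using z j by auto
        then show "(\<Sum>x\<in>S. \<beta> x * h j x) = (\<integral>x. h j x \<partial>M)"
          using S(4) unfolding \<beta>_def m_def by (simp add: sum_divide_distrib[symmetric])
      qed (use S in auto)
    next
      case nz: False
      have Kadd: "(\<lambda>j. u j + v j) \<in> K" if uK: "u \<in> K" and vK: "v \<in> K" for u v
      proof -
        obtain S1 a1 where 1: "finite S1" "S1 \<subseteq> space M" "\<forall>x\<in>S1. a1 x \<ge> 0" "sum a1 S1 > 0"
          "u = (\<lambda>j. \<Sum>x\<in>S1. a1 x * (h j x - m j))" using uK unfolding K_def by auto
        obtain S2 a2 where 2: "finite S2" "S2 \<subseteq> space M" "\<forall>x\<in>S2. a2 x \<ge> 0" "sum a2 S2 > 0"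
          "v = (\<lambda>j. \<Sum>x\<in>S2. a2 x * (h j x - m j))" using vK unfolding K_def by auto
        define a where "a = (\<lambda>x. (if x \<in> S1 then a1 x else 0) + (if x \<in> S2 then a2 x else 0))"
        have s: "(\<Sum>x\<in>S1 \<union> S2. a x * f x) = (\<Sum>x\<in>S1. a1 x * f x) + (\<Sum>x\<in>S2. a2 x * f x)" for f
          unfolding a_def distrib_right sum.distrib
          using 1 2 by (simp add: sum_if_ext)
        show ?thesis unfolding K_def
        proof (intro CollectI exI[of _ "S1 \<union> S2"] exI[of _ a] conjI)
          show "(\<lambda>j. u j + v j) = (\<lambda>j. \<Sum>x\<in>S1 \<union> S2. a x * (h j x - m j))" using 1 2 s by auto
          show "0 < sum a (S1 \<union> S2)" using s[of "\<lambda>_. 1"] 1 2 by simp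
        qed (use 1 2 in \<open>auto simp: a_def\<close>)
      qed
      have Kscl: "(\<lambda>j. c * u j) \<in> K" if uK: "u \<in> K" and c0: "c > 0" for u c
      proof -
        obtain S1 a1 where 1: "finite S1" "S1 \<subseteq> space M" "\<forall>x\<in>S1. a1 x \<ge> 0" "sum a1 S1 > 0"
          "u = (\<lambda>j. \<Sum>x\<in>S1. a1 x * (h j x - m j))" using uK unfolding K_def by auto
        show ?thesis unfolding K_def
        proof (intro CollectI exI[of _ S1] exI[of _ "\<lambda>x. c * a1 x"] conjI)
          show "(\<lambda>j. c * u j) = (\<lambda>j. \<Sum>x\<in>S1. c * a1 x * (h j x - m j))"
            using 1 by (auto simp: sum_distrib_left mult.assoc)
          show "0 < (\<Sum>x\<in>S1. c * a1 x)" using 1 c0 by (simp add: sum_distrib_left[symmetric])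
        qed (use 1 c0 in auto)
      qed
      obtain l where l: "\<exists>j\<in>J. l j \<noteq> 0" "\<forall>v\<in>K. 0 \<le> (\<Sum>j\<in>J. l j * v j)"
        using sep_lemma[of J K, OF less.prems(1) Kadd Kscl] nz Jne by blast
      then obtain r where r: "r \<in> J" "l r \<noteq> 0" by auto
      define \<phi> where "\<phi> = (\<lambda>x. \<Sum>j\<in>J. l j * (h j x - m j))"
      have phi_nn: "\<phi> x \<ge> 0" if "x \<in> space M" for x
      proof -
        have "(\<lambda>j. \<Sum>y\<in>{x}. 1 * (h j y - m j)) \<in> K" unfolding K_def
          by (intro CollectI exI[of _ "{x}"] exI[of _ "\<lambda>_. 1"]) (use that in auto)
        from bspec[OF l(2) this] show ?thesis unfolding \<phi>_def by simp
      qed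
      have hint: "integrable M (h j)" if "j \<in> J" for j using less.prems that by auto
      have phi_int: "integrable M \<phi>" unfolding \<phi>_def using hint by (auto intro!: integrable_sum)
      have "(\<integral>x. \<phi> x \<partial>M) = (\<Sum>j\<in>J. l j * ((\<integral>x. h j x \<partial>M) - m j))"
        unfolding \<phi>_def using hint
        by (simp add: integral_sum integral_diff P.prob_space)
      also have "\<dots> = 0" unfolding m_def by simp
      finally have "(\<integral>x. \<phi> x \<partial>M) = 0" .
      then have AE0: "AE x in M. \<phi> x = 0"
        using integral_nonneg_eq_0_iff_AE[OF phi_int] phi_nn by auto
      have phi_meas: "\<phi> \<in> borel_measurable M" using phi_int by auto
      define A where "A = {x\<in>space M. \<phi> x = 0}"
      have A: "A \<in> sets M" unfolding A_def using phi_meas by measurable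
      have AE_A: "AE x in M. x \<in> A" using AE0 unfolding A_def by auto
      have A1: "emeasure M A = 1" using P.emeasure_eq_1_AE A AE_A by auto
      define M' where "M' = restrict_space M A"
      have pM': "prob_space M'" unfolding M'_def by (rule prob_space_restrict_space[OF A A1])
      have AiM: "A \<inter> space M \<in> sets M" using A by auto
      define J' where "J' = J - {r}"
      have "card J > 0" using r less.prems card_gt_0_iff by blast
      then have cJ: "card J' < card J" unfolding J'_def using r less.prems by (auto simp: card_Diff_singleton)
      have int': "integrable M' (h j)" if "j \<in> J'" for j
        unfolding M'_def integrable_restrict_space[OF AiM]
        using integrable_mult_indicator[OF A hint[of j]] that unfolding J'_def by simp
      have eq': "(\<integral>x. h j x \<partial>M') = m j" if jJ: "j \<in> J" for j
      proof -
        have "(\<integral>x. h j x \<partial>M') = (\<integral>x. indicator A x *\<^sub>R h j x \<partial>M)"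
          unfolding M'_def by (rule integral_restrict_space[OF AiM])
        also have "\<dots> = m j" unfolding m_def
          by (rule integral_cong_AE) (use AE_A A borel_measurable_integrable[OF hint[OF jJ]] in auto)
        finally show ?thesis .
      qed
      have fJ': "finite J'" using less.prems unfolding J'_def by auto
      obtain S \<alpha> where S: "finite S" "S \<subseteq> space M'" "\<forall>x\<in>S. \<alpha> x \<ge> 0" "sum \<alpha> S = 1"
        "\<forall>j\<in>J'. (\<Sum>x\<in>S. \<alpha> x * h j x) = (\<integral>x. h j x \<partial>M')"
        using less.hyps[OF cJ fJ' pM' int'] by blast
      have SA: "S \<subseteq> A" "S \<subseteq> space M" using S(2) A unfolding M'_def space_restrict_space A_def by auto
      have e1: "(\<Sum>x\<in>S. \<alpha> x * (h j x - m j)) = 0" if "j \<in> J'" for j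
      proof -
        have "(\<Sum>x\<in>S. \<alpha> x * (h j x - m j)) = (\<Sum>x\<in>S. \<alpha> x * h j x) - m j * sum \<alpha> S"
          by (simp add: algebra_simps sum_subtractf sum_distrib_left)
        then show ?thesis using S(4,5) that eq'[of j] unfolding J'_def by auto
      qed
      have "0 = (\<Sum>x\<in>S. \<alpha> x * \<phi> x)" using SA(1) unfolding A_def by (intro sum.neutral[symmetric]) auto
      also have "\<dots> = (\<Sum>x\<in>S. \<Sum>j\<in>J. l j * (\<alpha> x * (h j x - m j)))"
        unfolding \<phi>_def by (simp add: sum_distrib_left mult.left_commute)
      also have "\<dots> = (\<Sum>j\<in>J. \<Sum>x\<in>S. l j * (\<alpha> x * (h j x - m j)))" by (rule sum.swap)
      also have "\<dots> = (\<Sum>j\<in>J. l j * (\<Sum>x\<in>S. \<alpha> x * (h j x - m j)))"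
        by (simp add: sum_distrib_left)
      also have "\<dots> = l r * (\<Sum>x\<in>S. \<alpha> x * (h r x - m r)) + (\<Sum>j\<in>J'. l j * (\<Sum>x\<in>S. \<alpha> x * (h j x - m j)))"
        unfolding J'_def using r less.prems by (simp add: sum.remove)
      also have "\<dots> = l r * (\<Sum>x\<in>S. \<alpha> x * (h r x - m r))" using e1 by simp
      finally have "(\<Sum>x\<in>S. \<alpha> x * (h r x - m r)) = 0" using r by simp
      moreover have "(\<Sum>x\<in>S. \<alpha> x * (h r x - m r)) = (\<Sum>x\<in>S. \<alpha> x * h r x) - m r * sum \<alpha> S"
        by (simp add: algebra_simps sum_subtractf sum_distrib_left)
      ultimately have er: "(\<Sum>x\<in>S. \<alpha> x * h r x) = m r" using S(4) by simp
      show ?thesis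
      proof (intro exI[of _ S] exI[of _ \<alpha>] conjI ballI)
        fix j assume "j \<in> J"
        then show "(\<Sum>x\<in>S. \<alpha> x * h j x) = (\<integral>x. h j x \<partial>M)"
          using er S(5) eq' unfolding J'_def m_def by (cases "j = r") auto
      qed (use S SA in auto)
    qed
  qed
qed



lemma discrete_nn:
  fixes D :: "'b measure" and p :: "nat \<Rightarrow> 'b" and \<alpha> :: "nat \<Rightarrow> real"
  assumes \<alpha>: "\<forall>i\<le>n. \<alpha> i \<ge> 0" and p: "\<forall>i\<le>n. p i \<in> space D"
    and em: "\<forall>S\<in>sets D. emeasure D S = ennreal (\<Sum>i\<le>n. \<alpha> i * indicator S (p i))"
    and u: "u \<in> borel_measurable D"
  shows "(\<integral>\<^sup>+x. u x \<partial>D) = (\<Sum>i\<le>n. ennreal (\<alpha> i) * u (p i))"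
  using u
proof (induct rule: borel_measurable_induct)
  case (cong f g)
  have "(\<integral>\<^sup>+x. f x \<partial>D) = (\<integral>\<^sup>+x. g x \<partial>D)" using cong by (intro nn_integral_cong) auto
  also have "\<dots> = (\<Sum>i\<le>n. ennreal (\<alpha> i) * g (p i))" by fact
  also have "\<dots> = (\<Sum>i\<le>n. ennreal (\<alpha> i) * f (p i))" using cong p by (intro sum.cong) auto
  finally show ?case .
next
  case (set A)
  have "(\<integral>\<^sup>+x. indicator A x \<partial>D) = ennreal (\<Sum>i\<le>n. \<alpha> i * indicator A (p i))"
    using set em by simp
  also have "\<dots> = (\<Sum>i\<le>n. ennreal (\<alpha> i * indicator A (p i)))"
    using \<alpha> by (subst sum_ennreal) auto
  also have "\<dots> = (\<Sum>i\<le>n. ennreal (\<alpha> i) * indicator A (p i))"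
    using \<alpha> by (intro sum.cong) (auto simp: indicator_def)
  finally show ?case .
next
  case (mult u c)
  then show ?case by (simp add: nn_integral_cmult sum_distrib_left mult.left_commute)
next
  case (add u v)
  then show ?case by (simp add: nn_integral_add sum.distrib distrib_left)
next
  case (seq U)
  have "(\<integral>\<^sup>+x. (SUP i. U i) x \<partial>D) = (\<integral>\<^sup>+x. (SUP i. U i x) \<partial>D)" by (simp only: SUP_apply)
  also have "\<dots> = (SUP i. integral\<^sup>N D (U i))"
    using seq by (intro nn_integral_monotone_convergence_SUP) auto
  also have "\<dots> = (SUP i. \<Sum>k\<le>n. ennreal (\<alpha> k) * U i (p k))" using seq by simp
  also have "\<dots> = (\<Sum>k\<le>n. SUP i. ennreal (\<alpha> k) * U i (p k))"
  proof (rule ennreal_SUP_sum)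
    fix k show "incseq (\<lambda>i. ennreal (\<alpha> k) * U i (p k))"
      using seq(4) unfolding incseq_def le_fun_def by (auto intro: mult_left_mono)
  qed
  also have "\<dots> = (\<Sum>k\<le>n. ennreal (\<alpha> k) * (SUP i. U i) (p k))"
    by (simp only: SUP_mult_left_ennreal SUP_apply)
  finally show ?case .
qed

lemma discrete_real:
  fixes D :: "'b measure" and p :: "nat \<Rightarrow> 'b" and \<alpha> :: "nat \<Rightarrow> real"
  assumes \<alpha>: "\<forall>i\<le>n. \<alpha> i \<ge> 0" and p: "\<forall>i\<le>n. p i \<in> space D"
    and em: "\<forall>S\<in>sets D. emeasure D S = ennreal (\<Sum>i\<le>n. \<alpha> i * indicator S (p i))"
    and f: "f \<in> borel_measurable D"
  shows "integrable D f" "integral\<^sup>L D f = (\<Sum>i\<le>n. \<alpha> i * f (p i))"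
    "ereal_expect D f = ereal (\<Sum>i\<le>n. \<alpha> i * f (p i))"
proof -
  have gen: "(\<integral>\<^sup>+x. ennreal (F x) \<partial>D) = ennreal (\<Sum>i\<le>n. \<alpha> i * max 0 (F (p i)))"
    if F: "F \<in> borel_measurable D" for F
  proof -
    have "(\<integral>\<^sup>+x. ennreal (F x) \<partial>D) = (\<Sum>i\<le>n. ennreal (\<alpha> i) * ennreal (F (p i)))"
      using F by (intro discrete_nn[OF \<alpha> p em]) auto
    also have "\<dots> = (\<Sum>i\<le>n. ennreal (\<alpha> i * max 0 (F (p i))))"
      using \<alpha> by (intro sum.cong refl) (simp add: ennreal_mult ennreal_max_0)
    also have "\<dots> = ennreal (\<Sum>i\<le>n. \<alpha> i * max 0 (F (p i)))"
      using \<alpha> by (subst sum_ennreal) auto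
    finally show ?thesis .
  qed
  have P: "(\<integral>\<^sup>+x. ennreal (f x) \<partial>D) = ennreal (\<Sum>i\<le>n. \<alpha> i * max 0 (f (p i)))"
    using gen f by blast
  have N: "(\<integral>\<^sup>+x. ennreal (- f x) \<partial>D) = ennreal (\<Sum>i\<le>n. \<alpha> i * max 0 (- f (p i)))"
    using gen[of "\<lambda>x. - f x"] f by auto
  have nnP: "0 \<le> (\<Sum>i\<le>n. \<alpha> i * max 0 (f (p i)))" using \<alpha> by (auto intro!: sum_nonneg)
  have nnN: "0 \<le> (\<Sum>i\<le>n. \<alpha> i * max 0 (- f (p i)))" using \<alpha> by (auto intro!: sum_nonneg)
  have diff: "(\<Sum>i\<le>n. \<alpha> i * max 0 (f (p i))) - (\<Sum>i\<le>n. \<alpha> i * max 0 (- f (p i))) = (\<Sum>i\<le>n. \<alpha> i * f (p i))"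
    unfolding sum_subtractf[symmetric] by (intro sum.cong refl) (simp add: right_diff_distrib[symmetric] max_def)
  show int: "integrable D f" unfolding real_integrable_def using f P N by simp
  show "integral\<^sup>L D f = (\<Sum>i\<le>n. \<alpha> i * f (p i))"
    using real_lebesgue_integral_def[OF int] P N nnP nnN diff by simp
  show "ereal_expect D f = ereal (\<Sum>i\<le>n. \<alpha> i * f (p i))"
    unfolding ereal_expect_def using P N nnP nnN diff by simp
qed


lemma index_lemma:
  fixes \<beta> :: "'x \<Rightarrow> real"
  assumes "finite S" "card S \<le> Suc n" "S \<noteq> {}" "\<forall>x\<in>S. \<beta> x \<ge> 0"
  shows "\<exists>mu alpha. (\<forall>i\<le>n. alpha i \<ge> 0) \<and> (\<forall>i\<le>n. mu i \<in> S) \<and>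
     (\<forall>F. (\<Sum>i\<le>n. alpha i * F (mu i)) = (\<Sum>x\<in>S. \<beta> x * F x))"
proof -
  obtain e where e: "bij_betw e {0..<card S} S" using ex_bij_betw_nat_finite assms(1) by blast
  obtain x0 where x0: "x0 \<in> S" using assms by auto
  define mu where "mu = (\<lambda>i. if i < card S then e i else x0)"
  define alpha where "alpha = (\<lambda>i. if i < card S then \<beta> (e i) else 0)"
  have eS: "e i \<in> S" if "i < card S" for i using e that bij_betwE by fastforce
  show ?thesis
  proof (intro exI[of _ mu] exI[of _ alpha] conjI allI impI)
    show "0 \<le> alpha i" for i using eS assms(4) unfolding alpha_def by auto
    show "mu i \<in> S" for i using eS x0 unfolding mu_def by auto
    fix F :: "'x \<Rightarrow> real"
    have "(\<Sum>i\<le>n. alpha i * F (mu i)) = (\<Sum>i\<le>n. if i < card S then \<beta> (e i) * F (e i) else 0)"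
      by (intro sum.cong) (auto simp: alpha_def mu_def)
    also have "\<dots> = (\<Sum>i\<in>{i\<in>{..n}. i < card S}. \<beta> (e i) * F (e i))" by (rule sum.inter_filter[symmetric]) simp
    also have "{i\<in>{..n}. i < card S} = {0..<card S}" using assms(2) by auto
    also have "(\<Sum>i\<in>{0..<card S}. \<beta> (e i) * F (e i)) = (\<Sum>x\<in>S. \<beta> x * F x)"
      using sum.reindex_bij_betw[OF e, of "\<lambda>x. \<beta> x * F x"] by simp
    finally show "(\<Sum>i\<le>n. alpha i * F (mu i)) = (\<Sum>x\<in>S. \<beta> x * F x)" .
  qed
qed


lemma ereal_le_by_reals:
  fixes x y :: ereal
  assumes "\<And>c. ereal c < x \<Longrightarrow> ereal c \<le> y"
  shows "x \<le> y"
proof (rule ccontr)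
  assume "\<not> x \<le> y"
  then have "y < x" by auto
  then obtain z where "y < ereal z" "ereal z < x" using ereal_dense2 by blast
  then show False using assms[of z] by auto
qed


lemma trunc:
  fixes Phi :: "'b \<Rightarrow> real"
  assumes M: "prob_space M" and Pm: "Phi \<in> borel_measurable M"
    and sb: "(\<exists>C. \<forall>x. Phi x \<le> C) \<or> (\<exists>C. \<forall>x. C \<le> Phi x)"
    and c: "ereal c < ereal_expect M Phi"
  shows "\<exists>\<psi>. integrable M \<psi> \<and> (\<forall>x. \<psi> x \<le> Phi x) \<and> c < integral\<^sup>L M \<psi>"
proof -
  interpret P: prob_space M by fact
  define P where "P = (\<integral>\<^sup>+x. ennreal (Phi x) \<partial>M)"
  define N where "N = (\<integral>\<^sup>+x. ennreal (- Phi x) \<partial>M)"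
  have cP: "ereal c < enn2ereal P - enn2ereal N" using c unfolding ereal_expect_def P_def N_def .
  have bnd: "(\<integral>\<^sup>+x. ennreal (F x) \<partial>M) < \<infinity>" if "\<forall>x. F x \<le> C" for F C
  proof -
    have "(\<integral>\<^sup>+x. ennreal (F x) \<partial>M) \<le> (\<integral>\<^sup>+x. ennreal C \<partial>M)"
      using that by (intro nn_integral_mono) (auto intro: ennreal_leI)
    also have "\<dots> = ennreal C" using P.emeasure_space_1 by simp
    finally show ?thesis using le_less_trans by fastforce
  qed
  have NP: "N < \<infinity> \<or> P < \<infinity>"
  proof (cases "\<exists>C. \<forall>x. Phi x \<le> C")
    case True
    then show ?thesis using bnd[of Phi] unfolding P_def by blast
  next
    case False
    then obtain C where "\<forall>x. C \<le> Phi x" using sb by blast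
    then have "\<forall>x. - Phi x \<le> - C" by auto
    then show ?thesis using bnd[of "\<lambda>x. - Phi x" "- C"] unfolding N_def by blast
  qed
  show ?thesis
  proof (cases "N < \<infinity>")
    case False
    then have "N = \<infinity>" by (simp add: less_top[symmetric])
    moreover obtain p where "P = ennreal p" "p \<ge> 0" using NP False less_top_ennreal by auto
    ultimately show ?thesis using cP by simp
  next
    case Nfin: True
    obtain q where q: "N = ennreal q" "q \<ge> 0" using Nfin less_top_ennreal by auto
    show ?thesis
    proof (cases "P < \<infinity>")
      case True
      obtain p where p: "P = ennreal p" "p \<ge> 0" using True less_top_ennreal by auto
      have int: "integrable M Phi" unfolding real_integrable_def using Pm p q P_def N_def by auto
      have "integral\<^sup>L M Phi = p - q"
        using real_lebesgue_integral_def[OF int] p q unfolding P_def N_def by simp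
      then show ?thesis using int cP p q by (intro exI[of _ Phi]) auto
    next
      case False
      then have Pinf: "P = \<infinity>" by (simp add: less_top[symmetric])
      define U where "U = (\<lambda>k x. ennreal (min (Phi x) (real k)))"
      have Um: "U k \<in> borel_measurable M" for k unfolding U_def using Pm by measurable
      have Uinc: "incseq U" unfolding incseq_def le_fun_def U_def
        by (auto intro!: ennreal_leI)
      have Usup: "(SUP k. U k x) = ennreal (Phi x)" for x
      proof (rule antisym)
        show "(SUP k. U k x) \<le> ennreal (Phi x)" unfolding U_def by (auto intro!: SUP_least ennreal_leI)
        have "U (nat \<lceil>Phi x\<rceil>) x = ennreal (Phi x)" unfolding U_def
          using real_nat_ceiling_ge[of "Phi x"] by (simp add: min_absorb1)
        then show "ennreal (Phi x) \<le> (SUP k. U k x)" by (metis UNIV_I SUP_upper)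
      qed
      have sEq: "(SUP k. integral\<^sup>N M (U k)) = P"
        unfolding P_def Usup[symmetric] by (rule nn_integral_monotone_convergence_SUP[symmetric, OF Uinc Um])
      define t where "t = \<bar>c\<bar> + q + 1"
      have t0: "t \<ge> 0" unfolding t_def using q by auto
      have "ennreal t < (SUP k. integral\<^sup>N M (U k))" unfolding sEq Pinf by simp
      then obtain k where k: "ennreal t < integral\<^sup>N M (U k)" unfolding less_SUP_iff by blast
      define \<psi> where "\<psi> = (\<lambda>x. min (Phi x) (real k))"
      have \<psi>m: "\<psi> \<in> borel_measurable M" unfolding \<psi>_def using Pm by measurable
      have Pk: "(\<integral>\<^sup>+x. ennreal (\<psi> x) \<partial>M) < \<infinity>" by (rule bnd[of _ "real k"]) (auto simp: \<psi>_def)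
      have Nk: "(\<integral>\<^sup>+x. ennreal (- \<psi> x) \<partial>M) \<le> N" unfolding N_def \<psi>_def
        by (intro nn_integral_mono) (auto simp: min_def ennreal_neg)
      then have Nk': "(\<integral>\<^sup>+x. ennreal (- \<psi> x) \<partial>M) < \<infinity>" using Nfin by (metis le_less_trans)
      have int: "integrable M \<psi>" unfolding real_integrable_def using \<psi>m Pk Nk' by auto
      obtain pk where pk: "(\<integral>\<^sup>+x. ennreal (\<psi> x) \<partial>M) = ennreal pk" "pk \<ge> 0" using Pk less_top_ennreal by auto
      obtain nk where nk: "(\<integral>\<^sup>+x. ennreal (- \<psi> x) \<partial>M) = ennreal nk" "nk \<ge> 0" using Nk' less_top_ennreal by auto
      have "t < pk" using k pk t0 unfolding U_def \<psi>_def by (simp add: ennreal_less_iff)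
      moreover have "nk \<le> q" using Nk nk q by (simp add: ennreal_le_iff)
      moreover have "integral\<^sup>L M \<psi> = pk - nk" using real_lebesgue_integral_def[OF int] pk nk by simp
      ultimately have "c < integral\<^sup>L M \<psi>" unfolding t_def by linarith
      then show ?thesis using int by (intro exI[of _ \<psi>]) (auto simp: \<psi>_def)
    qed
  qed
qed



theorem theorem3p4:
  fixes Phi :: "'a::t2_space \<Rightarrow> real"
    and Psi :: "'a \<Rightarrow> 'q::topological_space"
    and f :: "'p::polish_space \<Rightarrow> 'a"
    and g :: "nat \<Rightarrow> 'q \<Rightarrow> real"
    and I :: "nat \<Rightarrow> real set"
    and n :: nat
  assumes suslin: "continuous_on UNIV f" "surj f"
    and Phi_meas: "Phi \<in> borel_measurable borel"
    and Phi_semibdd: "(\<exists>c. \<forall>x. Phi x \<le> c) \<or> (\<exists>c. \<forall>x. c \<le> Phi x)"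
    and Q_metrizable: "metrizable_space (euclidean :: 'q topology)"
    and Q_separable: "separable_space (euclidean :: 'q topology)"
    and Psi_meas: "Psi \<in> borel \<rightarrow>\<^sub>M borel"
    and g_meas: "\<And>j. j \<in> {1..n} \<Longrightarrow> g j \<in> borel_measurable borel"
    and I_int: "\<And>j. j \<in> {1..n} \<Longrightarrow> closed_interval (I j)"
  shows "U_val Phi (PiI n Psi g I) = U_val Phi (PiI n Psi g I \<inter> Delta n)
       \<and> U_val Phi (PiI n Psi g I \<inter> Delta n) =
           Sup {ereal (\<Sum>i\<le>n. alpha i * Phi (mu i)) | alpha mu.
                  (\<forall>i\<le>n. alpha i \<ge> 0) \<and> (\<Sum>i\<le>n. alpha i) = 1 \<and>
                  (\<forall>j\<in>{1..n}. (\<Sum>i\<le>n. alpha i * g j (Psi (mu i))) \<in> I j)}"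
proof -
  define SF where "SF = {ereal (\<Sum>i\<le>n. alpha i * Phi (mu i)) | alpha mu.
                  (\<forall>i\<le>n. alpha i \<ge> 0) \<and> (\<Sum>i\<le>n. alpha i) = 1 \<and>
                  (\<forall>j\<in>{1..n}. (\<Sum>i\<le>n. alpha i * g j (Psi (mu i))) \<in> I j)}"
  have spU: "space pi = UNIV" if "sets pi = sets borel" for pi :: "'a measure"
    using sets_eq_imp_space_eq[OF that] by simp
  have Psi_pi: "Psi \<in> measurable pi borel" if "sets pi = sets borel" for pi :: "'a measure"
    using Psi_meas by (simp add: measurable_cong_sets[OF that refl])
  have Phi_pi: "Phi \<in> borel_measurable pi" if "sets pi = sets borel" for pi :: "'a measure"
    using Phi_meas by (simp add: measurable_cong_sets[OF that refl])
  have gPsi_pi: "(\<lambda>x. g j (Psi x)) \<in> borel_measurable pi" if "sets pi = sets borel" "j \<in> {1..n}"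
    for pi :: "'a measure" and j
    using measurable_compose[OF Psi_pi[OF that(1)] g_meas[OF that(2)]] .
  have PiI_facts: "sets pi = sets borel" "prob_space pi"
     "\<And>j. j \<in> {1..n} \<Longrightarrow> integrable pi (\<lambda>x. g j (Psi x))"
     "\<And>j. j \<in> {1..n} \<Longrightarrow> (\<integral>x. g j (Psi x) \<partial>pi) \<in> I j"
    if "pi \<in> PiI n Psi g I" for pi
  proof -
    show sp: "sets pi = sets borel" "prob_space pi" using that by (auto simp: PiI_def borel_probs_def)
    have Q: "distr pi borel Psi \<in> Qfrak n g I" using that by (auto simp: PiI_def)
    fix j assume j: "j \<in> {1..n}"
    have "integrable (distr pi borel Psi) (g j)" "(\<integral>x. g j x \<partial>distr pi borel Psi) \<in> I j"
      using Q j by (auto simp: Qfrak_def)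
    then show "integrable pi (\<lambda>x. g j (Psi x))" "(\<integral>x. g j (Psi x) \<partial>pi) \<in> I j"
      using integrable_distr_eq[OF Psi_pi[OF sp(1)] g_meas[OF j]]
        integral_distr[OF Psi_pi[OF sp(1)] g_meas[OF j]] by auto
  qed
  have A: "U_val Phi (PiI n Psi g I \<inter> Delta n) = Sup SF"
  proof (rule antisym)
    show "U_val Phi (PiI n Psi g I \<inter> Delta n) \<le> Sup SF" unfolding U_val_def
    proof (rule SUP_least)
      fix pi assume pi: "pi \<in> PiI n Psi g I \<inter> Delta n"
      note F = PiI_facts[of pi]
      have sp: "sets pi = sets borel" "prob_space pi" using F pi by auto
      obtain mu alpha where a: "\<forall>i\<le>n. alpha i \<ge> (0::real)"
        and em: "\<forall>S\<in>sets borel. emeasure pi S = ennreal (\<Sum>i\<le>n. alpha i * indicator S (mu i))"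
        using pi by (auto simp: Delta_def)
      have em': "\<forall>S\<in>sets pi. emeasure pi S = ennreal (\<Sum>i\<le>n. alpha i * indicator S (mu i))"
        using em sp(1) by simp
      have p: "\<forall>i\<le>n. mu i \<in> space pi" using spU[OF sp(1)] by simp
      have "emeasure pi (space pi) = 1" using prob_space.emeasure_space_1[OF sp(2)] .
      then have "ennreal (\<Sum>i\<le>n. alpha i) = 1" using em'[rule_format, of "space pi"] spU[OF sp(1)] sets.top[of pi] by simp
      then have s1: "(\<Sum>i\<le>n. alpha i) = 1" by simp
      have ex: "ereal_expect pi Phi = ereal (\<Sum>i\<le>n. alpha i * Phi (mu i))"
        by (rule discrete_real(3)[OF a p em' Phi_pi[OF sp(1)]])
      have cons: "(\<Sum>i\<le>n. alpha i * g j (Psi (mu i))) \<in> I j" if j: "j \<in> {1..n}" for j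
        using F(4)[OF _ j] pi discrete_real(2)[OF a p em' gPsi_pi[OF sp(1) j]] by auto
      show "ereal_expect pi Phi \<le> Sup SF"
        unfolding ex SF_def by (rule Sup_upper) (use a s1 cons in blast)
    qed
    show "Sup SF \<le> U_val Phi (PiI n Psi g I \<inter> Delta n)"
    proof (rule Sup_least)
      fix y assume "y \<in> SF"
      then obtain alpha mu where a: "\<forall>i\<le>n. alpha i \<ge> (0::real)" and s1: "(\<Sum>i\<le>n. alpha i) = 1"
        and cons: "\<forall>j\<in>{1..n}. (\<Sum>i\<le>n. alpha i * g j (Psi (mu i))) \<in> I j"
        and y: "y = ereal (\<Sum>i\<le>n. alpha i * Phi (mu i))"
        unfolding SF_def by blast
      define xs where "xs = map (\<lambda>i. (mu i, alpha i)) [0..<Suc n]"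
      have lsum: "sum_list (map f [0..<Suc n]) = (\<Sum>i\<le>n. f i)" for f :: "nat \<Rightarrow> real"
      proof -
        have "sum_list (map f [0..<Suc n]) = sum f {0..<Suc n}"
          by (simp only: sum_set_upt_conv_sum_list_nat[symmetric] set_upt)
        also have "{0..<Suc n} = {..n}" by auto
        finally show ?thesis .
      qed
      have wf: "pmf_of_list_wf xs"
      proof (rule pmf_of_list_wfI)
        have ms: "map snd xs = map alpha [0..<Suc n]" unfolding xs_def by (simp only: map_map o_def snd_conv)
        show "sum_list (map snd xs) = 1" unfolding ms lsum by (rule s1)
        show "x \<ge> 0" if "x \<in> set (map snd xs)" for x
          using that a unfolding ms by auto
      qed
      define pi where "pi = distr (measure_pmf (pmf_of_list xs)) borel id"
      have sp: "sets pi = sets borel" unfolding pi_def by simp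
      have pp: "prob_space pi" unfolding pi_def
        by (rule prob_space.prob_space_distr[OF prob_space_measure_pmf]) simp
      have emb: "emeasure pi S = ennreal (\<Sum>i\<le>n. alpha i * indicator S (mu i))" if S: "S \<in> sets borel" for S
      proof -
        have "emeasure pi S = emeasure (measure_pmf (pmf_of_list xs)) S"
          unfolding pi_def using S by (subst emeasure_distr) auto
        also have "\<dots> = ennreal (sum_list (map snd (filter (\<lambda>x. fst x \<in> S) xs)))"
          by (rule emeasure_pmf_of_list[OF wf])
        also have "sum_list (map snd (filter (\<lambda>x. fst x \<in> S) xs)) = (\<Sum>i\<le>n. alpha i * indicator S (mu i))"
        proof -
          have "sum_list (map snd (filter (\<lambda>x. fst x \<in> S) xs)) = sum_list (map (\<lambda>x. if fst x \<in> S then snd x else 0) xs)"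
            by (rule sum_list_map_filter')
          also have "\<dots> = sum_list (map (\<lambda>i. alpha i * indicator S (mu i)) [0..<Suc n])"
            unfolding xs_def map_map o_def by (intro arg_cong[where f=sum_list] map_cong) (auto simp: indicator_def)
          also have "\<dots> = (\<Sum>i\<le>n. alpha i * indicator S (mu i))" by (rule lsum)
          finally show ?thesis .
        qed
        finally show ?thesis .
      qed
      have em': "\<forall>S\<in>sets pi. emeasure pi S = ennreal (\<Sum>i\<le>n. alpha i * indicator S (mu i))"
        using emb sp by simp
      have p: "\<forall>i\<le>n. mu i \<in> space pi" using spU[OF sp] by simp
      have inD: "pi \<in> Delta n" unfolding Delta_def using sp a emb by blast
      have inP: "pi \<in> PiI n Psi g I"
        unfolding PiI_def borel_probs_def Qfrak_def
      proof (intro CollectI conjI ballI)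
        show "sets pi = sets borel" "prob_space pi" by fact+
        show "sets (distr pi borel Psi) = sets borel" by simp
        show "prob_space (distr pi borel Psi)"
          by (rule prob_space.prob_space_distr[OF pp Psi_pi[OF sp]])
        fix j assume j: "j \<in> {1..n}"
        show "integrable (distr pi borel Psi) (g j)"
          using integrable_distr_eq[OF Psi_pi[OF sp] g_meas[OF j]]
            discrete_real(1)[OF a p em' gPsi_pi[OF sp j]] by simp
        show "(\<integral>x. g j x \<partial>distr pi borel Psi) \<in> I j"
          using integral_distr[OF Psi_pi[OF sp] g_meas[OF j]]
            discrete_real(2)[OF a p em' gPsi_pi[OF sp j]] cons j by simp
      qed
      have "ereal_expect pi Phi = y"
        using discrete_real(3)[OF a p em' Phi_pi[OF sp]] y by simp
      then show "y \<le> U_val Phi (PiI n Psi g I \<inter> Delta n)"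
        unfolding U_val_def using inD inP by (metis IntI SUP_upper)
    qed
  qed
  have core: "ereal c \<le> Sup SF" if pi: "pi \<in> PiI n Psi g I" and c: "ereal c < ereal_expect pi Phi" for pi c
  proof -
    note F = PiI_facts[OF pi]
    obtain \<psi> where \<psi>: "integrable pi \<psi>" "\<forall>x. \<psi> x \<le> Phi x" "c < integral\<^sup>L pi \<psi>"
      using trunc[OF F(2) Phi_pi[OF F(1)] Phi_semibdd c] by blast
    define h where "h = (\<lambda>j x. if j = 0 then \<psi> x else g j (Psi x))"
    have hint: "integrable pi (h j)" if "j \<in> {0..n}" for j
    proof (cases "j = 0")
      case True then show ?thesis using \<psi>(1) by (simp add: h_def)
    next
      case False then show ?thesis using F(3)[of j] that by (simp add: h_def)
    qed
    obtain S \<alpha> where S: "finite S" "S \<subseteq> space pi" "\<forall>x\<in>S. \<alpha> x \<ge> 0" "sum \<alpha> S = 1"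
      "\<forall>j\<in>{0..n}. (\<Sum>x\<in>S. \<alpha> x * h j x) = (\<integral>x. h j x \<partial>pi)"
      using mean_hull[of "{0..n}" pi h] F(2) hint by blast
    define R where "R = insert (\<lambda>_. 1) ((\<lambda>j x. g j (Psi x)) ` {1..n})"
    have Rfin: "finite R" unfolding R_def by simp
    have cR: "card R \<le> Suc n"
    proof -
      have "card R \<le> Suc (card ((\<lambda>j x. g j (Psi x)) ` {1..n}))" unfolding R_def by (rule card_insert_le_m1) simp_all
      also have "card ((\<lambda>j x. g j (Psi x)) ` {1..n}) \<le> n" using card_image_le[of "{1..n}"] by simp
      finally show ?thesis by simp
    qed
    obtain S' \<beta> where S': "S' \<subseteq> S" "card S' \<le> card R" "\<forall>x\<in>S'. \<beta> x \<ge> 0"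
      "\<forall>r\<in>R. (\<Sum>x\<in>S'. \<beta> x * r x) = (\<Sum>x\<in>S. \<alpha> x * r x)"
      "(\<Sum>x\<in>S. \<alpha> x * \<psi> x) \<le> (\<Sum>x\<in>S'. \<beta> x * \<psi> x)"
      using reduce[OF S(1) Rfin _ S(3), of \<psi>] unfolding R_def by auto
    have b1: "(\<Sum>x\<in>S'. \<beta> x * 1) = 1" using S'(4) S(4) unfolding R_def by auto
    have fS': "finite S'" using S'(1) S(1) finite_subset by auto
    have neS': "S' \<noteq> {}" using b1 by auto
    obtain mu alpha where ma: "\<forall>i\<le>n. alpha i \<ge> (0::real)" "\<forall>i\<le>n. mu i \<in> S'"
      "\<forall>F. (\<Sum>i\<le>n. alpha i * F (mu i)) = (\<Sum>x\<in>S'. \<beta> x * F x)"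
      using index_lemma[OF fS' _ neS' S'(3), of n] S'(2) cR by auto
    have s1: "(\<Sum>i\<le>n. alpha i) = 1" using ma(3)[rule_format, of "\<lambda>_. 1"] b1 by simp
    have cons: "(\<Sum>i\<le>n. alpha i * g j (Psi (mu i))) \<in> I j" if j: "j \<in> {1..n}" for j
    proof -
      have "(\<Sum>i\<le>n. alpha i * g j (Psi (mu i))) = (\<Sum>x\<in>S'. \<beta> x * g j (Psi x))"
        using ma(3)[rule_format, of "\<lambda>x. g j (Psi x)"] by simp
      also have "\<dots> = (\<Sum>x\<in>S. \<alpha> x * g j (Psi x))" using S'(4) j unfolding R_def by auto
      also have "\<dots> = (\<Sum>x\<in>S. \<alpha> x * h j x)" using j by (simp add: h_def)
      also have "\<dots> = (\<integral>x. h j x \<partial>pi)" using S(5) j by auto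
      also have "\<dots> = (\<integral>x. g j (Psi x) \<partial>pi)" using j by (simp add: h_def)
      finally show ?thesis using F(4)[OF j] by simp
    qed
    have "c < (\<Sum>x\<in>S. \<alpha> x * \<psi> x)" using bspec[OF S(5), of 0] \<psi>(3) by (simp add: h_def)
    also have "\<dots> \<le> (\<Sum>x\<in>S'. \<beta> x * \<psi> x)" by (rule S'(5))
    also have "\<dots> \<le> (\<Sum>x\<in>S'. \<beta> x * Phi x)"
      using S'(3) \<psi>(2) by (intro sum_mono mult_left_mono) auto
    also have "\<dots> = (\<Sum>i\<le>n. alpha i * Phi (mu i))" using ma(3)[rule_format, of Phi] by simp
    finally have lt: "c < (\<Sum>i\<le>n. alpha i * Phi (mu i))" .
    have "ereal (\<Sum>i\<le>n. alpha i * Phi (mu i)) \<in> SF" unfolding SF_def using ma(1) s1 cons by blast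
    then have "ereal (\<Sum>i\<le>n. alpha i * Phi (mu i)) \<le> Sup SF" by (rule Sup_upper)
    then show ?thesis using lt by (meson ereal_less_eq(3) less_imp_le order_trans)
  qed
  have B: "U_val Phi (PiI n Psi g I) = U_val Phi (PiI n Psi g I \<inter> Delta n)"
  proof (rule antisym)
    show "U_val Phi (PiI n Psi g I) \<le> U_val Phi (PiI n Psi g I \<inter> Delta n)"
      unfolding A unfolding U_val_def
      by (rule SUP_least, rule ereal_le_by_reals) (use core in blast)
    show "U_val Phi (PiI n Psi g I \<inter> Delta n) \<le> U_val Phi (PiI n Psi g I)"
      unfolding U_val_def by (rule SUP_subset_mono) auto
  qed
  show ?thesis using A B unfolding SF_def by simp
qed


end
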